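(* Let $c_1>0$, $c_2>0$ and $k\in\mathbb{R}\setminus\{0\}$, and consider the system on $\mathbb{R}^3$ $$\dot z_1=\frac1{c_2}z_2z_3,\qquad \dot z_2=-\frac1{c_1}z_1z_3,\qquad \dot z_3=-\frac{k}{c_1}z_1 .$$ Let $H>0$ be a constant. Then the solution of this system restricted to the constant level surface $$z_1^2+\frac{c_1}{c_2}z_2^2=2H$$ is $$z_1(t)=\sqrt{2H}\cos\theta(t),\qquad z_2(t)=\sqrt{\frac{c_2}{c_1}}\sqrt{2H}\sin\theta(t),\qquad z_3(t)=-\sqrt{c_1c_2}\,\dot\theta(t),$$ where $\theta(t)$ is a solution of the pendulum equation $$\ddot\theta(t)=\frac{k}{c_1^2}\sqrt{\frac{c_1}{c_2}}\sqrt{2H}\cos\theta(t).$$ *)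

theory Defs
  imports "HOL-Analysis.Analysis"
begin

definition sys_solution ::
  "real \<Rightarrow> real \<Rightarrow> real \<Rightarrow> real set \<Rightarrow> (real \<Rightarrow> real) \<Rightarrow> (real \<Rightarrow> real) \<Rightarrow> (real \<Rightarrow> real) \<Rightarrow> bool" where
  "sys_solution c1 c2 k I z1 z2 z3 \<longleftrightarrow>
     (\<forall>t\<in>I. (z1 has_real_derivative (1 / c2) * z2 t * z3 t) (at t)
          \<and> (z2 has_real_derivative - (1 / c1) * z1 t * z3 t) (at t)
          \<and> (z3 has_real_derivative - (k / c1) * z1 t) (at t))"

definition pendulum_solution ::
  "real \<Rightarrow> real \<Rightarrow> real \<Rightarrow> real \<Rightarrow> real set \<Rightarrow> (real \<Rightarrow> real) \<Rightarrow> (real \<Rightarrow> real) \<Rightarrow> bool" where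
  "pendulum_solution c1 c2 k H I \<theta> d\<theta> \<longleftrightarrow>
     (\<forall>t\<in>I. (\<theta> has_real_derivative d\<theta> t) (at t)
          \<and> (d\<theta> has_real_derivative (k / c1\<^sup>2) * sqrt (c1 / c2) * sqrt (2 * H) * cos (\<theta> t)) (at t))"

end

theory Submission
  imports Defs "HOL-Analysis.Interval_Integral"
begin

lemma open_interval_einterval:
  fixes I :: "real set"
  assumes "open I" "is_interval I" "t0 \<in> I"
  shows "I = einterval (Inf (ereal ` I)) (Sup (ereal ` I))"
    and "Inf (ereal ` I) < Sup (ereal ` I)"
proof -
  have lo: "Inf (ereal ` I) < ereal x" if "x \<in> I" for x
  proof -
    obtain e where e: "e > 0" "ball x e \<subseteq> I" using open_contains_ball[THEN iffD1, OF assms(1), rule_format, OF \<open>x \<in> I\<close>] by blast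
    have "x - e/2 \<in> ball x e" using e(1) by (simp add: dist_real_def)
    hence "x - e/2 \<in> I" using e(2) by blast
    hence "Inf (ereal ` I) \<le> ereal (x - e/2)" by (simp add: INF_lower)
    also have "\<dots> < ereal x" using e by simp
    finally show ?thesis .
  qed
  have hi: "ereal x < Sup (ereal ` I)" if "x \<in> I" for x
  proof -
    obtain e where e: "e > 0" "ball x e \<subseteq> I" using open_contains_ball[THEN iffD1, OF assms(1), rule_format, OF \<open>x \<in> I\<close>] by blast
    have "x + e/2 \<in> ball x e" using e(1) by (simp add: dist_real_def)
    hence "x + e/2 \<in> I" using e(2) by blast
    hence A: "ereal (x + e/2) \<le> Sup (ereal ` I)" by (simp add: SUP_upper)
    have B: "ereal x < ereal (x + e/2)" using e by simp
    show ?thesis by (rule less_le_trans[OF B A])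
  qed
  show "I = einterval (Inf (ereal ` I)) (Sup (ereal ` I))"
  proof
    show "I \<subseteq> einterval (Inf (ereal ` I)) (Sup (ereal ` I))"
      using lo hi by (auto simp: einterval_def)
    show "einterval (Inf (ereal ` I)) (Sup (ereal ` I)) \<subseteq> I"
    proof
      fix x assume "x \<in> einterval (Inf (ereal ` I)) (Sup (ereal ` I))"
      hence x: "Inf (ereal ` I) < ereal x" "ereal x < Sup (ereal ` I)" by (auto simp: einterval_def)
      obtain y where y: "y \<in> I" "ereal y < ereal x" using x(1) by (auto simp: Inf_less_iff)
      obtain z where z: "z \<in> I" "ereal x < ereal z" using x(2) by (auto simp: less_Sup_iff)
      have "y \<le> x" "x \<le> z" using y(2) z(2) by auto
      then show "x \<in> I" using assms(2) y(1) z(1) unfolding is_interval_1 by blast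
    qed
  qed
  show "Inf (ereal ` I) < Sup (ereal ` I)" by (rule less_trans[OF lo[OF assms(3)] hi[OF assms(3)]])
qed

lemma antideriv_open_interval:
  fixes I :: "real set"
  assumes "open I" "is_interval I" "\<And>t. t \<in> I \<Longrightarrow> isCont f t"
  shows "\<exists>F. \<forall>t\<in>I. (F has_real_derivative f t) (at t)"
proof (cases "I = {}")
  case True then show ?thesis by auto
next
  case False
  then obtain t0 where t0: "t0 \<in> I" by auto
  note E = open_interval_einterval[OF assms(1,2) t0]
  obtain F where F: "\<forall>x :: real. Inf (ereal ` I) < x \<longrightarrow> x < Sup (ereal ` I) \<longrightarrow> (F has_vector_derivative f x) (at x)"
    using einterval_antiderivative[OF E(2), of f] assms(3) E(1)
    by (metis einterval_iff)
  show ?thesis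
    by (rule exI[of _ F]) (metis E(1) F einterval_iff has_real_derivative_iff_has_vector_derivative)
qed

lemma alg5: "(c2::real) = r2^2 \<Longrightarrow> r1 > 0 \<Longrightarrow> r2 > 0 \<Longrightarrow>
  A * (- sin x * d) = 1 / c2 * (r2 / r1 * A * sin x) * (- (r1 * r2) * d)"
  by (simp add: field_simps power2_eq_square)
lemma alg6: "(c1::real) = r1^2 \<Longrightarrow> r1 > 0 \<Longrightarrow> r2 > 0 \<Longrightarrow>
  r2 / r1 * A * (cos x * d) = - (1 / c1) * (A * cos x) * (- (r1 * r2) * d)"
  by (simp add: field_simps power2_eq_square)
lemma alg7: "(c1::real) = r1^2 \<Longrightarrow> r1 > 0 \<Longrightarrow> r2 > 0 \<Longrightarrow>
  - (r1 * r2) * (k / c1\<^sup>2 * (r1 / r2) * A * cos x) = - (k / c1) * (A * cos x)"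
  by (simp add: field_simps power2_eq_square)
lemma alg8: "(c1::real) = r1^2 \<Longrightarrow> c2 = r2^2 \<Longrightarrow> r1 > 0 \<Longrightarrow> r2 > 0 \<Longrightarrow>
  c1 / c2 * (r2 / r1 * A * s)\<^sup>2 = A^2 * s^2"
  by (simp add: field_simps power2_eq_square)

lemma alg9: "(c1::real) = r1^2 \<Longrightarrow> c2 = r2^2 \<Longrightarrow> r1 > 0 \<Longrightarrow> r2 > 0 \<Longrightarrow> A > 0 \<Longrightarrow>
  a^2 + c1 / c2 * b^2 = A^2 \<Longrightarrow> (a / A)^2 + (b * r1 / (r2 * A))^2 = 1"
proof -
  assume h: "c1 = r1^2" "c2 = r2^2" "r1 > 0" "r2 > 0" "A > 0" "a^2 + c1 / c2 * b^2 = A^2"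
  have "(a / A)^2 + (b * r1 / (r2 * A))^2 = (a^2 + c1 / c2 * b^2) / A^2"
    using h(1-5) by (simp add: field_simps power2_eq_square)
  then show ?thesis using h(5,6) by simp
qed

lemma dir2:
  fixes c1 c2 k H :: real
  assumes c1: "c1 > 0" and c2: "c2 > 0" and H: "H > 0"
    and P: "pendulum_solution c1 c2 k H I \<theta> d\<theta>"
  shows "sys_solution c1 c2 k I (\<lambda>t. sqrt (2 * H) * cos (\<theta> t))
           (\<lambda>t. sqrt (c2 / c1) * sqrt (2 * H) * sin (\<theta> t))
           (\<lambda>t. - sqrt (c1 * c2) * d\<theta> t)
        \<and> (\<forall>t\<in>I. (sqrt (2 * H) * cos (\<theta> t))\<^sup>2 + (c1 / c2) * (sqrt (c2 / c1) * sqrt (2 * H) * sin (\<theta> t))\<^sup>2 = 2 * H)"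
proof -
  define r1 where "r1 = sqrt c1"
  define r2 where "r2 = sqrt c2"
  define A where "A = sqrt (2*H)"
  have r1: "r1 > 0" "c1 = r1^2" using c1 by (auto simp: r1_def)
  have r2: "r2 > 0" "c2 = r2^2" using c2 by (auto simp: r2_def)
  have A: "A^2 = 2*H" using H by (simp add: A_def)
  have s1: "sqrt (c2/c1) = r2/r1" "sqrt (c1/c2) = r1/r2" "sqrt (c1*c2) = r1*r2"
    by (simp_all add: r1_def r2_def real_sqrt_divide real_sqrt_mult)
  show ?thesis
    unfolding sys_solution_def s1 A_def[symmetric]
  proof (intro conjI ballI)
    fix t assume t: "t \<in> I"
    have d1: "(\<theta> has_real_derivative d\<theta> t) (at t)"
      and d2: "(d\<theta> has_real_derivative (k / c1\<^sup>2) * (r1/r2) * A * cos (\<theta> t)) (at t)"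
      using P t unfolding pendulum_solution_def s1 A_def[symmetric] by auto
    show "((\<lambda>t. A * cos (\<theta> t)) has_real_derivative 1 / c2 * (r2 / r1 * A * sin (\<theta> t)) * (- (r1 * r2) * d\<theta> t)) (at t)"
      by (rule DERIV_cong[OF DERIV_cmult[OF DERIV_fun_cos[OF d1]] alg5[OF r2(2) r1(1) r2(1)]])
    show "((\<lambda>t. r2 / r1 * A * sin (\<theta> t)) has_real_derivative - (1 / c1) * (A * cos (\<theta> t)) * (- (r1 * r2) * d\<theta> t)) (at t)"
      by (rule DERIV_cong[OF DERIV_cmult[OF DERIV_fun_sin[OF d1]] alg6[OF r1(2) r1(1) r2(1)]])
    show "((\<lambda>t. - (r1 * r2) * d\<theta> t) has_real_derivative - (k / c1) * (A * cos (\<theta> t))) (at t)"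
      by (rule DERIV_cong[OF DERIV_cmult[OF d2] alg7[OF r1(2) r1(1) r2(1)]])
    have e: "c1 / c2 * (r2 / r1 * A * sin (\<theta> t))\<^sup>2 = A^2 * (sin (\<theta> t))^2"
      by (rule alg8[OF r1(2) r2(2) r1(1) r2(1)])
    have "(A * cos (\<theta> t))\<^sup>2 + A^2 * (sin (\<theta> t))^2 = A^2 * ((sin (\<theta> t))^2 + (cos (\<theta> t))^2)"
      by algebra
    then show "(A * cos (\<theta> t))\<^sup>2 + c1 / c2 * (r2 / r1 * A * sin (\<theta> t))\<^sup>2 = 2 * H" using A e by simp
  qed
qed

lemma alg1: "(c2::real) = r2^2 \<Longrightarrow> r1 > 0 \<Longrightarrow> r2 > 0 \<Longrightarrow> A > 0 \<Longrightarrow>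
  1 / c2 * a * b / A = a * r1 / (r2 * A) * b / (r1 * r2)"
  by (simp add: field_simps power2_eq_square)
lemma alg2: "(c1::real) = r1^2 \<Longrightarrow> r1 > 0 \<Longrightarrow> r2 > 0 \<Longrightarrow> A > 0 \<Longrightarrow>
  - (1/c1) * a * b * r1 / (r2 * A) = - (a / A) * b / (r1 * r2)"
  by (simp add: field_simps power2_eq_square)
lemma alg3: "(v * z3 / (r1 * r2)) * cos th + (- sin th * (- z3 / (r1 * r2))) * u
           + ((- u * z3 / (r1 * r2)) * sin th + (cos th * (- z3 / (r1 * r2))) * v) = (0::real)"
  by (simp add: algebra_simps)
lemma alg4: "(c1::real) = r1^2 \<Longrightarrow> r1 > 0 \<Longrightarrow> r2 > 0 \<Longrightarrow> z = A * cos th \<Longrightarrow>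
  - (- (k / c1) * z) / (r1 * r2) = k / c1\<^sup>2 * (r1 / r2) * A * cos th"
  by (simp add: field_simps power2_eq_square)

lemma dir1:
  fixes c1 c2 k H :: real
  assumes c1: "c1 > 0" and c2: "c2 > 0" and H: "H > 0"
    and I: "open I" "is_interval I"
    and S: "sys_solution c1 c2 k I z1 z2 z3"
    and L: "\<forall>t\<in>I. (z1 t)\<^sup>2 + (c1 / c2) * (z2 t)\<^sup>2 = 2 * H"
  shows "\<exists>\<theta> d\<theta>. pendulum_solution c1 c2 k H I \<theta> d\<theta>
                 \<and> (\<forall>t\<in>I. z1 t = sqrt (2 * H) * cos (\<theta> t)
                        \<and> z2 t = sqrt (c2 / c1) * sqrt (2 * H) * sin (\<theta> t)
                        \<and> z3 t = - sqrt (c1 * c2) * d\<theta> t)"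
proof (cases "I = {}")
  case True then show ?thesis by (auto simp: pendulum_solution_def)
next
  case False
  then obtain t0 where t0: "t0 \<in> I" by auto
  define r1 where "r1 = sqrt c1"
  define r2 where "r2 = sqrt c2"
  define A where "A = sqrt (2*H)"
  have r1: "r1 > 0" "c1 = r1^2" using c1 by (auto simp: r1_def)
  have r2: "r2 > 0" "c2 = r2^2" using c2 by (auto simp: r2_def)
  have A: "A^2 = 2*H" "A > 0" using H by (auto simp: A_def)
  have s1: "sqrt (c2/c1) = r2/r1" "sqrt (c1/c2) = r1/r2" "sqrt (c1*c2) = r1*r2"
    by (simp_all add: r1_def r2_def real_sqrt_divide real_sqrt_mult)
  have D1: "(z1 has_real_derivative (1 / c2) * z2 t * z3 t) (at t)"
   and D2: "(z2 has_real_derivative - (1 / c1) * z1 t * z3 t) (at t)"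
   and D3: "(z3 has_real_derivative - (k / c1) * z1 t) (at t)" if "t \<in> I" for t
    using S that unfolding sys_solution_def by auto
  obtain F where F: "\<forall>t\<in>I. (F has_real_derivative z3 t) (at t)"
    using antideriv_open_interval[OF I, of z3] D3 DERIV_isCont by blast
  define u where "u t = z1 t / A" for t
  define v where "v t = z2 t * r1 / (r2 * A)" for t
  have uv: "(u t)^2 + (v t)^2 = 1" if "t \<in> I" for t
  proof -
    have "(z1 t)\<^sup>2 + (c1 / c2) * (z2 t)\<^sup>2 = A^2" using L that A by simp
    then show ?thesis unfolding u_def v_def by (rule alg9[OF r1(2) r2(2) r1(1) r2(1) A(2)])
  qed
  obtain \<phi> where \<phi>: "u t0 = cos \<phi>" "v t0 = sin \<phi>"
    using sincos_total_2pi[OF uv[OF t0]] by metis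
  define q where "q = 1 / (r1 * r2)"
  define \<theta> where "\<theta> t = \<phi> + (F t0 - F t) * q" for t
  define d\<theta> where "d\<theta> t = - z3 t / (r1 * r2)" for t
  have T: "(\<theta> has_real_derivative d\<theta> t) (at t)" if "t \<in> I" for t
  proof -
    have "((\<lambda>t. \<phi> + (F t0 - F t) * q) has_real_derivative 0 + (0 - z3 t) * q) (at t)"
      by (intro DERIV_add DERIV_const DERIV_cmult_right DERIV_diff F[rule_format, OF that])
    then show ?thesis by (simp add: q_def \<theta>_def[abs_def] d\<theta>_def)
  qed
  have U: "(u has_real_derivative v t * z3 t / (r1 * r2)) (at t)" if "t \<in> I" for t
  proof -
    have "(u has_real_derivative ((1/c2) * z2 t * z3 t) / A) (at t)"
      unfolding u_def[abs_def] by (intro DERIV_cdivide D1[OF that])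
    then show ?thesis unfolding v_def by (rule DERIV_cong[OF _ alg1[OF r2(2) r1(1) r2(1) A(2)]])
  qed
  have V: "(v has_real_derivative - u t * z3 t / (r1 * r2)) (at t)" if "t \<in> I" for t
  proof -
    have "(v has_real_derivative ((- (1/c1) * z1 t * z3 t) * r1) / (r2 * A)) (at t)"
      unfolding v_def[abs_def] by (intro DERIV_cdivide DERIV_cmult_right D2[OF that])
    then show ?thesis unfolding u_def by (rule DERIV_cong[OF _ alg2[OF r1(2) r1(1) r2(1) A(2)]])
  qed
  define G where "G t = u t * cos (\<theta> t) + v t * sin (\<theta> t)" for t
  have GD: "(G has_real_derivative 0) (at t)" if "t \<in> I" for t
  proof -
    have "(G has_real_derivative (v t * z3 t / (r1 * r2)) * cos (\<theta> t) + (- sin (\<theta> t) * d\<theta> t) * u t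
           + ((- u t * z3 t / (r1 * r2)) * sin (\<theta> t) + (cos (\<theta> t) * d\<theta> t) * v t)) (at t)"
      unfolding G_def[abs_def]
      by (intro DERIV_add DERIV_mult DERIV_fun_cos DERIV_fun_sin U[OF that] V[OF that] T[OF that])
    then show ?thesis unfolding d\<theta>_def by (rule DERIV_cong[OF _ alg3])
  qed
  have Gc: "continuous_on I G"
    using GD by (meson DERIV_isCont continuous_at_imp_continuous_on)
  obtain c where c: "\<And>t. t \<in> I \<Longrightarrow> G t = c"
    using DERIV_zero_connected_constant[of I "{}" G] I GD Gc is_interval_connected by blast
  have "G t0 = 1" using \<phi> unfolding G_def \<theta>_def by (simp add: sin_cos_squared_add3)
  hence G1: "G t = 1" if "t \<in> I" for t using c that t0 by metis
  have cs: "u t = cos (\<theta> t) \<and> v t = sin (\<theta> t)" if "t \<in> I" for t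
  proof -
    have "(u t - cos (\<theta> t))^2 + (v t - sin (\<theta> t))^2 = (u t)^2 + (v t)^2 + ((sin (\<theta> t))^2 + (cos (\<theta> t))^2) - 2 * G t"
      unfolding G_def by (simp add: power2_diff algebra_simps)
    also have "\<dots> = 0" using uv[OF that] G1[OF that] by simp
    finally show ?thesis by (simp add: add_nonneg_eq_0_iff)
  qed
  show ?thesis
  proof (rule exI[of _ \<theta>], rule exI[of _ d\<theta>], intro conjI ballI)
    have PD: "(d\<theta> has_real_derivative k / c1\<^sup>2 * sqrt (c1 / c2) * sqrt (2 * H) * cos (\<theta> t)) (at t)"
      if t: "t \<in> I" for t
    proof -
      have z1u: "z1 t = A * u t" using A(2) by (simp add: u_def)
      have z1e: "z1 t = A * cos (\<theta> t)" using z1u cs[OF t] by simp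
      have "(d\<theta> has_real_derivative (- (- (k / c1) * z1 t)) / (r1 * r2)) (at t)"
        unfolding d\<theta>_def[abs_def] by (intro DERIV_cdivide DERIV_minus D3[OF t])
      then show ?thesis unfolding s1 A_def[symmetric]
        by (rule DERIV_cong[OF _ alg4[OF r1(2) r1(1) r2(1) z1e]])
    qed
    show "pendulum_solution c1 c2 k H I \<theta> d\<theta>"
      unfolding pendulum_solution_def using T PD by blast
    fix t assume t: "t \<in> I"
    have e1: "z1 t = A * u t" using A(2) by (simp add: u_def)
    have e2: "z2 t = r2 / r1 * A * v t" using A(2) r1(1) r2(1) by (simp add: v_def)
    have e3: "z3 t = - (r1 * r2) * d\<theta> t" using r1(1) r2(1) by (simp add: d\<theta>_def)
    show "z1 t = sqrt (2 * H) * cos (\<theta> t)" unfolding A_def[symmetric] using e1 cs[OF t] by simp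
    show "z2 t = sqrt (c2 / c1) * sqrt (2 * H) * sin (\<theta> t)" unfolding A_def[symmetric] s1 using e2 cs[OF t] by simp
    show "z3 t = - sqrt (c1 * c2) * d\<theta> t" unfolding s1 using e3 by simp
  qed
qed

theorem proposition5p3:
  fixes c1 c2 k H :: real and I :: "real set"
  assumes "c1 > 0" and "c2 > 0" and "k \<noteq> 0" and "H > 0"
    and "open I" and "is_interval I"
  shows "(\<forall>z1 z2 z3. sys_solution c1 c2 k I z1 z2 z3
            \<and> (\<forall>t\<in>I. (z1 t)\<^sup>2 + (c1 / c2) * (z2 t)\<^sup>2 = 2 * H)
          \<longrightarrow> (\<exists>\<theta> d\<theta>. pendulum_solution c1 c2 k H I \<theta> d\<theta>
                 \<and> (\<forall>t\<in>I. z1 t = sqrt (2 * H) * cos (\<theta> t)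
                        \<and> z2 t = sqrt (c2 / c1) * sqrt (2 * H) * sin (\<theta> t)
                        \<and> z3 t = - sqrt (c1 * c2) * d\<theta> t)))
       \<and> (\<forall>\<theta> d\<theta>. pendulum_solution c1 c2 k H I \<theta> d\<theta> \<longrightarrow>
            (let z1 = (\<lambda>t. sqrt (2 * H) * cos (\<theta> t));
                 z2 = (\<lambda>t. sqrt (c2 / c1) * sqrt (2 * H) * sin (\<theta> t));
                 z3 = (\<lambda>t. - sqrt (c1 * c2) * d\<theta> t)
             in sys_solution c1 c2 k I z1 z2 z3
                \<and> (\<forall>t\<in>I. (z1 t)\<^sup>2 + (c1 / c2) * (z2 t)\<^sup>2 = 2 * H)))"
proof (intro conjI allI impI)
  fix z1 z2 z3
  assume h: "sys_solution c1 c2 k I z1 z2 z3 \<and> (\<forall>t\<in>I. (z1 t)\<^sup>2 + (c1 / c2) * (z2 t)\<^sup>2 = 2 * H)"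
  show "\<exists>\<theta> d\<theta>. pendulum_solution c1 c2 k H I \<theta> d\<theta>
                 \<and> (\<forall>t\<in>I. z1 t = sqrt (2 * H) * cos (\<theta> t)
                        \<and> z2 t = sqrt (c2 / c1) * sqrt (2 * H) * sin (\<theta> t)
                        \<and> z3 t = - sqrt (c1 * c2) * d\<theta> t)"
    by (rule dir1[OF assms(1,2,4,5,6) conjunct1[OF h] conjunct2[OF h]])
next
  fix \<theta> d\<theta>
  assume h: "pendulum_solution c1 c2 k H I \<theta> d\<theta>"
  show "let z1 = (\<lambda>t. sqrt (2 * H) * cos (\<theta> t));
                 z2 = (\<lambda>t. sqrt (c2 / c1) * sqrt (2 * H) * sin (\<theta> t));
                 z3 = (\<lambda>t. - sqrt (c1 * c2) * d\<theta> t)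
             in sys_solution c1 c2 k I z1 z2 z3
                \<and> (\<forall>t\<in>I. (z1 t)\<^sup>2 + (c1 / c2) * (z2 t)\<^sup>2 = 2 * H)"
    unfolding Let_def by (rule dir2[OF assms(1,2,4) h])
qed

end
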